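(* Let $u=(a,b,c)$ and $v=(a',b',c')$ be nonzero vectors in $\mathbb{Z}^3$ with $a^2+b^2+c^2=a'^2+b'^2+c'^2$, $aa'+bb'+cc'=0$ and $\gcd(a,b,c,a',b',c')=1$. Let $\square$ be the square $\mathrm{conv}\{0,u,v,u+v\}\subset\mathbb{R}^3$. Put $d=\gcd(a,b,c)$, $d'=\gcd(a',b',c')$ and $D=\gcd(bc'-b'c,\ ac'-a'c,\ ab'-a'b)$. Then the Ehrhart polynomial of $\square$ is $$E_\square(t)=Dt^2+(d+d')t+1.$$
   Context: For a polytope $P\subset\mathbb{R}^n$ with vertices in $\mathbb{Z}^n$, its Ehrhart polynomial $E_P$ is the polynomial satisfying $E_P(t)=\#(tP\cap\mathbb{Z}^n)$ for all positive integers $t$. *)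

theory Defs
  imports "HOL-Analysis.Analysis" "HOL-Computational_Algebra.Polynomial"
begin

definition lattice_points :: "(real^'n) set" where
  "lattice_points = {x. \<forall>i. x $ i \<in> \<int>}"

definition ehrhart_poly :: "(real^'n) set \<Rightarrow> real poly" where
  "ehrhart_poly P = (THE p. \<forall>t::nat. t > 0 \<longrightarrow>
      poly p (real t) = real (card (((\<lambda>x. real t *\<^sub>R x) ` P) \<inter> lattice_points)))"

definition int_vec3 :: "int \<Rightarrow> int \<Rightarrow> int \<Rightarrow> real^3" where
  "int_vec3 a b c = vector [of_int a, of_int b, of_int c]"

end

theory Submission
  imports Defs
begin

type_synonym iv = "int \<times> int \<times> int"

fun dot :: "iv \<Rightarrow> iv \<Rightarrow> int" where
  "dot (a,b,c) (x,y,z) = a*x + b*y + c*z"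
fun cross :: "iv \<Rightarrow> iv \<Rightarrow> iv" where
  "cross (a,b,c) (x,y,z) = (b*z - c*y, c*x - a*z, a*y - b*x)"
fun sm :: "int \<Rightarrow> iv \<Rightarrow> iv" where
  "sm k (a,b,c) = (k*a, k*b, k*c)"
fun vadd :: "iv \<Rightarrow> iv \<Rightarrow> iv" where
  "vadd (a,b,c) (x,y,z) = (a+x, b+y, c+z)"
fun vsub :: "iv \<Rightarrow> iv \<Rightarrow> iv" where
  "vsub (a,b,c) (x,y,z) = (a-x, b-y, c-z)"
fun gv :: "iv \<Rightarrow> int" where
  "gv (a,b,c) = gcd a (gcd b c)"

lemma prim:
  assumes "v \<noteq> (0,0,0)"
  shows "gv v > 0 \<and> (\<exists>v0 p. v = sm (gv v) v0 \<and> dot p v0 = 1)"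
proof -
  obtain a b c where v: "v = (a,b,c)" by (cases v) auto
  define g where "g = gcd a (gcd b c)"
  have gv: "gv v = g" using v g_def by simp
  have gpos: "g > 0" using assms v g_def by auto
  obtain s r where sr: "s*a + r*gcd b c = g" using bezout_int g_def by blast
  obtain s' r' where sr': "s' *b + r' *c = gcd b c" using bezout_int by blast
  have da: "g dvd a" and db: "g dvd b" and dc: "g dvd c" unfolding g_def by (meson gcd_dvd1 gcd_dvd2 dvd_trans)+
  then obtain a0 b0 c0 where a0: "a = g*a0" and b0: "b = g*b0" and c0: "c = g*c0"
    by (meson dvdE)
  have "g * (s*a0 + r* s' *b0 + r*r' *c0) = g * 1"
  proof -
    have "g * (s*a0 + r* s' *b0 + r*r' *c0) = s*(g*a0) + r*(s' *(g*b0) + r' *(g*c0))"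
      by (simp add: algebra_simps)
    also have "\<dots> = g" using sr sr' a0[symmetric] b0[symmetric] c0[symmetric] by simp
    finally show ?thesis by simp
  qed
  then have "s*a0 + r* s' *b0 + r*r' *c0 = 1" using gpos by (metis less_irrefl mult_cancel_left)
  then have "dot (s, r* s', r*r') (a0,b0,c0) = 1" by (simp add: algebra_simps)
  moreover have "v = sm (gv v) (a0,b0,c0)" using v a0 b0 c0 gv by simp
  ultimately show ?thesis using gpos gv by auto
qed

lemma par_lemma:
  assumes "cross y v0 = (0,0,0)" "dot p v0 = 1"
  shows "y = sm (dot p y) v0"
proof -
  obtain y1 y2 y3 where y: "y = (y1,y2,y3)" by (cases y) auto
  obtain a b c where v: "v0 = (a,b,c)" by (cases v0) auto
  obtain p1 p2 p3 where p: "p = (p1,p2,p3)" by (cases p) auto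
  have h: "y2*c - y3*b = 0" "y3*a - y1*c = 0" "y1*b - y2*a = 0" "p1*a+p2*b+p3*c = 1"
    using assms y v p by auto
  have "y1 = (p1*y1+p2*y2+p3*y3)*a" using h by algebra
  moreover have "y2 = (p1*y1+p2*y2+p3*y3)*b" using h by algebra
  moreover have "y3 = (p1*y1+p2*y2+p3*y3)*c" using h by algebra
  ultimately show ?thesis using y v p by simp
qed

lemma vcases: obtains a b c where "x = (a,b,c)" by (cases x) auto

lemma dot_sm1[simp]: "dot (sm k x) y = k * dot x y"
  by (cases x rule: vcases; cases y rule: vcases) (simp add: algebra_simps)
lemma dot_sm2[simp]: "dot x (sm k y) = k * dot x y"
  by (cases x rule: vcases; cases y rule: vcases) (simp add: algebra_simps)
lemma dot_add1[simp]: "dot (vadd x y) z = dot x z + dot y z"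
  by (cases x rule: vcases; cases y rule: vcases; cases z rule: vcases) (simp add: algebra_simps)
lemma dot_sub1[simp]: "dot (vsub x y) z = dot x z - dot y z"
  by (cases x rule: vcases; cases y rule: vcases; cases z rule: vcases) (simp add: algebra_simps)
lemma dot_comm: "dot x y = dot y x"
  by (cases x rule: vcases; cases y rule: vcases) (simp add: algebra_simps)
lemma cross_sm1[simp]: "cross (sm k x) y = sm k (cross x y)"
  by (cases x rule: vcases; cases y rule: vcases) (simp add: algebra_simps)
lemma cross_sm2[simp]: "cross x (sm k y) = sm k (cross x y)"
  by (cases x rule: vcases; cases y rule: vcases) (simp add: algebra_simps)
lemma cross_add1[simp]: "cross (vadd x y) z = vadd (cross x z) (cross y z)"
  by (cases x rule: vcases; cases y rule: vcases; cases z rule: vcases) (simp add: algebra_simps)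
lemma cross_sub1[simp]: "cross (vsub x y) z = vsub (cross x z) (cross y z)"
  by (cases x rule: vcases; cases y rule: vcases; cases z rule: vcases) (simp add: algebra_simps)
lemma cross_anti: "cross x y = sm (-1) (cross y x)"
  by (cases x rule: vcases; cases y rule: vcases) (simp add: algebra_simps)
lemma triple: "cross (cross a b) c = vsub (sm (dot a c) b) (sm (dot b c) a)"
  by (cases a rule: vcases; cases b rule: vcases; cases c rule: vcases) (simp add: algebra_simps)
lemma dot_cross1[simp]: "dot a (cross a b) = 0"
  by (cases a rule: vcases; cases b rule: vcases) (simp add: algebra_simps)
lemma dot_cross2[simp]: "dot b (cross a b) = 0"
  by (cases a rule: vcases; cases b rule: vcases) (simp add: algebra_simps)
lemma lagrange: "dot (cross a b) (cross a b) = dot a a * dot b b - (dot a b)^2"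
  by (cases a rule: vcases; cases b rule: vcases) (simp add: algebra_simps power2_eq_square)
lemma dot_self_pos: "x \<noteq> (0,0,0) \<Longrightarrow> dot x x > 0"
proof (cases x rule: vcases)
  case (1 a b c)
  assume "x \<noteq> (0,0,0)"
  then have "a \<noteq> 0 \<or> b \<noteq> 0 \<or> c \<noteq> 0" using 1 by auto
  moreover have "a*a \<ge> 0" "b*b \<ge> 0" "c*c \<ge> 0" by simp_all
  moreover have "a \<noteq> 0 \<Longrightarrow> a*a > 0" "b \<noteq> 0 \<Longrightarrow> b*b > 0" "c \<noteq> 0 \<Longrightarrow> c*c > 0"
    by (auto simp add: zero_less_mult_iff linorder_neq_iff)
  ultimately have "a*a + b*b + c*c > 0" by linarith
  then show ?thesis using 1 by simp
qed
lemma sm_zero: "sm k x = (0,0,0) \<longleftrightarrow> k = 0 \<or> x = (0,0,0)"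
  by (cases x rule: vcases) auto
lemma sm_inj: "sm k x = sm k' x \<Longrightarrow> x \<noteq> (0,0,0) \<Longrightarrow> k = k'"
  by (cases x rule: vcases) auto
lemma sm_sm[simp]: "sm k (sm l x) = sm (k*l) x"
  by (cases x rule: vcases) auto
lemma sm_1[simp]: "sm 1 x = x"
  by (cases x rule: vcases) auto
lemma vsub_self[simp]: "vsub x x = (0,0,0)"
  by (cases x rule: vcases) auto
lemma vsub_0_iff: "vsub x y = (0,0,0) \<longleftrightarrow> x = y"
  by (cases x rule: vcases; cases y rule: vcases) auto
lemma cross_zero[simp]: "cross x (0,0,0) = (0,0,0)" "cross (0,0,0) x = (0,0,0)"
  by (cases x rule: vcases; simp)+
lemma dot_zero[simp]: "dot x (0,0,0) = 0" "dot (0,0,0) x = 0"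
  by (cases x rule: vcases; simp)+
lemma sm_zero_v[simp]: "sm k (0,0,0) = (0,0,0)" by simp
lemma vadd_sub[simp]: "vadd y (vsub x y) = x"
  by (cases x rule: vcases; cases y rule: vcases) auto
lemma vsub_add[simp]: "vsub (vadd y x) y = x"
  by (cases x rule: vcases; cases y rule: vcases) auto
lemma vadd_cancel: "vadd y x = vadd y x' \<longleftrightarrow> x = x'"
  by (cases x rule: vcases; cases y rule: vcases; cases x' rule: vcases) auto
lemma gv_dvd: "gv x dvd x1" if "x = (x1,x2,x3)" for x1 x2 x3
  using that by simp
lemma dvd_gv: "k dvd gv (sm k y)"
  by (cases y rule: vcases) simp

lemma cardK:
  fixes r M T :: int
  assumes "r > 0" "T \<ge> 0"
  shows "card {k. 0 \<le> k*r + M \<and> k*r + M < T*r} = nat T \<and> finite {k. 0 \<le> k*r + M \<and> k*r + M < T*r}"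
proof -
  define q where "q = M div r"
  define s where "s = M mod r"
  have M: "M = q*r + s" and s: "0 \<le> s" "s < r" using assms unfolding q_def s_def by auto
  have key1: "0 \<le> n*r + s \<longleftrightarrow> 0 \<le> n" for n
  proof
    assume "0 \<le> n" then show "0 \<le> n*r + s" using assms s by simp
  next
    assume h: "0 \<le> n*r + s"
    show "0 \<le> n"
    proof (rule ccontr)
      assume "\<not> 0 \<le> n" then have "n \<le> -1" by simp
      then have "n*r \<le> (-1)*r" using assms by (intro mult_right_mono) auto
      then show False using h s by simp
    qed
  qed
  have key2: "n*r + s < T*r \<longleftrightarrow> n < T" for n
  proof
    assume h: "n*r + s < T*r"
    show "n < T"
    proof (rule ccontr)
      assume "\<not> n < T" then have "T*r \<le> n*r" using assms by (intro mult_right_mono) auto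
      then show False using h s by linarith
    qed
  next
    assume "n < T" then have "n \<le> T - 1" by simp
    then have "n*r \<le> (T-1)*r" using assms by (intro mult_right_mono) auto
    then show "n*r + s < T*r" using s by (simp add: algebra_simps)
  qed
  have "{k. 0 \<le> k*r + M \<and> k*r + M < T*r} = {-q..<T-q}"
  proof -
    have "k*r + M = (k+q)*r + s" for k using M by (simp add: algebra_simps)
    then show ?thesis using key1 key2 by auto
  qed
  then show ?thesis by simp
qed


lemma sm_0[simp]: "sm 0 x = (0,0,0)" by (cases x rule: vcases) auto
lemma vsub_z2[simp]: "vsub x (0,0,0) = x" by (cases x rule: vcases) auto
lemma vadd_z2[simp]: "vadd x (0,0,0) = x" by (cases x rule: vcases) auto
lemma vadd_z1[simp]: "vadd (0,0,0) x = x" by (cases x rule: vcases) auto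
lemma vsub_z1: "vsub (0,0,0) x = sm (-1) x" by (cases x rule: vcases) auto
lemma cross_self[simp]: "cross x x = (0,0,0)" by (cases x rule: vcases) auto
lemma sm_vsub: "vsub (sm a x) (sm b x) = sm (a-b) x" by (cases x rule: vcases) (auto simp: algebra_simps)

lemma int_count:
  fixes u v :: iv and t N :: int
  assumes nzu: "u \<noteq> (0,0,0)" and nzv: "v \<noteq> (0,0,0)" and uv: "dot u v = 0"
    and uu: "dot u u = N" and vv: "dot v v = N" and t: "t \<ge> 0"
  shows "int (card {x. dot x (cross v u) = 0 \<and> 0 \<le> dot x u \<and> dot x u \<le> t*N \<and> 0 \<le> dot x v \<and> dot x v \<le> t*N})
     = t^2 * gv (cross v u) + t*(gv u + gv v) + 1"
proof -
  define w where "w = cross v u"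
  have vu: "dot v u = 0" using uv dot_comm by metis
  have Npos: "N > 0" using dot_self_pos[OF nzu] uu by simp
  have ww: "dot w w = N*N" unfolding w_def lagrange using uu vv vu by simp
  have wnz: "w \<noteq> (0,0,0)" using ww Npos by auto
  obtain u0 p where u0: "u = sm (gv u) u0" and p: "dot p u0 = 1" and dpos: "gv u > 0"
    using prim[OF nzu] by blast
  obtain v0 p' where v0: "v = sm (gv v) v0" and p': "dot p' v0 = 1" and d'pos: "gv v > 0"
    using prim[OF nzv] by blast
  obtain w0 q where w0: "w = sm (gv w) w0" and q: "dot q w0 = 1" and Dpos: "gv w > 0"
    using prim[OF wnz] by blast
  define d where "d = gv u"
  define d' where "d' = gv v"
  define D where "D = gv w"
  note u0 = u0[folded d_def] and v0 = v0[folded d'_def] and w0 = w0[folded D_def]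
  note dpos = dpos[folded d_def] and d'pos = d'pos[folded d'_def] and Dpos = Dpos[folded D_def]
  have u0nz: "u0 \<noteq> (0,0,0)" using u0 nzu by auto
  have v0nz: "v0 \<noteq> (0,0,0)" using v0 nzv by auto
  have w0nz: "w0 \<noteq> (0,0,0)" using w0 wnz by auto
  have wu: "dot w u = 0" unfolding w_def by (subst dot_comm) simp
  have wv: "dot w v = 0" unfolding w_def by (subst dot_comm) simp
  have w0u0: "dot w0 u0 = 0"
  proof -
    have "D * (d * dot w0 u0) = 0" using wu w0 u0 by (metis dot_sm1 dot_sm2)
    then show ?thesis using dpos Dpos by simp
  qed
  have u0w: "dot u0 w = 0"
  proof -
    have "d * dot u0 w = 0" using wu u0 dot_comm by (metis dot_sm1)
    then show ?thesis using dpos by simp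
  qed
  have v0w: "dot v0 w = 0"
  proof -
    have "d' * dot v0 w = 0" using wv v0 dot_comm by (metis dot_sm1)
    then show ?thesis using d'pos by simp
  qed
  have u0v: "dot u0 v = 0"
  proof -
    have "d * dot u0 v = 0" using uv u0 by (metis dot_sm1)
    then show ?thesis using dpos by simp
  qed
  have v0u: "dot v0 u = 0"
  proof -
    have "d' * dot v0 u = 0" using vu v0 by (metis dot_sm1)
    then show ?thesis using d'pos by simp
  qed
  define z1 where "z1 = cross p w0"
  have cz: "cross z1 u0 = w0" unfolding z1_def triple using p w0u0 by simp
  have z1w: "dot z1 w = 0"
  proof -
    have "dot z1 w = D * dot w0 z1" using w0 dot_comm by (metis dot_sm2)
    then show ?thesis unfolding z1_def by simp
  qed
  define f where "f = (\<lambda>(j,k). vadd (sm j z1) (sm k u0))"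
  have rep: "\<exists>j k. x = f (j,k)" if x: "dot x w = 0" for x
  proof -
    have "cross (cross x u0) w = (0,0,0)" unfolding triple using x u0w by simp
    then have "sm D (cross (cross x u0) w0) = (0,0,0)" using w0 by (metis cross_sm2)
    then have "cross (cross x u0) w0 = (0,0,0)" using Dpos sm_zero by auto
    then have cx: "cross x u0 = sm (dot q (cross x u0)) w0" using par_lemma q by blast
    define j where "j = dot q (cross x u0)"
    define y where "y = vsub x (sm j z1)"
    have "cross y u0 = (0,0,0)" unfolding y_def using cx cz j_def by simp
    then have "y = sm (dot p y) u0" using par_lemma p by blast
    then have "x = f (j, dot p y)" unfolding f_def using vadd_sub[of "sm j z1" x] y_def by simp
    then show ?thesis by blast
  qed
  have finj: "f (j,k) = f (j',k') \<Longrightarrow> j = j' \<and> k = k'" for j k j' k'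
  proof -
    assume h: "f (j,k) = f (j',k')"
    then have "cross (f (j,k)) u0 = cross (f (j',k')) u0" by simp
    then have "sm j w0 = sm j' w0" unfolding f_def using cz by simp
    then have jj: "j = j'" using sm_inj w0nz by blast
    then have "sm k u0 = sm k' u0" using h unfolding f_def by (simp add: vadd_cancel)
    then show ?thesis using jj sm_inj u0nz by blast
  qed
  define s where "s = dot z1 v"
  define m where "m = dot z1 u"
  define r where "r = dot u0 u"
  define r' where "r' = dot v0 v"
  have fw: "dot (f (j,k)) w = 0" for j k unfolding f_def using z1w u0w by simp
  have fu: "dot (f (j,k)) u = j*m + k*r" for j k unfolding f_def m_def r_def by simp
  have fv: "dot (f (j,k)) v = j* s" for j k unfolding f_def s_def using u0v by simp
  have Ds: "D * s = d * N"
  proof -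
    have "cross (vsub (sm d v) (sm D z1)) u0 = vsub (sm d (cross v u0)) (sm D w0)"
      using cz by simp
    also have "sm d (cross v u0) = w" unfolding w_def using u0 by (metis cross_sm2)
    also have "sm D w0 = w" using w0 by simp
    finally have "cross (vsub (sm d v) (sm D z1)) u0 = (0,0,0)" by simp
    then have "vsub (sm d v) (sm D z1) = sm (dot p (vsub (sm d v) (sm D z1))) u0"
      using par_lemma p by blast
    then have "dot (vsub (sm d v) (sm D z1)) v = dot (sm (dot p (vsub (sm d v) (sm D z1))) u0) v"
      by simp
    then show ?thesis using u0v vv s_def by simp
  qed
  have "d dvd D"
  proof -
    have "w = sm d (cross v u0)" unfolding w_def using u0 by (metis cross_sm2)
    then show ?thesis unfolding D_def using dvd_gv by metis
  qed
  then obtain e where De: "D = d * e" by blast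
  have epos: "e > 0" using De dpos Dpos by (simp add: zero_less_mult_iff)
  have es: "e * s = N" using Ds De dpos by simp
  have spos: "s > 0" using es epos Npos by (metis zero_less_mult_pos)
  have dr: "d * r = N" unfolding r_def using uu u0 by (metis dot_sm1)
  have rpos: "r > 0" using dr dpos Npos by (metis zero_less_mult_pos)
  have dr': "d' * r' = N" unfolding r'_def using vv v0 by (metis dot_sm1)
  have r'pos: "r' > 0" using dr' d'pos Npos by (metis zero_less_mult_pos)
  have perp1: "y = sm (dot p' y) v0" if "dot y w = 0" "dot y u = 0" for y
  proof -
    have "cross (cross w u) y = (0,0,0)" unfolding triple using that dot_comm by (metis sm_0 vsub_self)
    moreover have "cross w u = sm (-N) v" unfolding w_def triple using vu uu by (simp add: vsub_z1)
    ultimately have "sm (-N) (cross v y) = (0,0,0)" by simp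
    then have "cross v y = (0,0,0)" using Npos sm_zero by auto
    then have "sm d' (cross v0 y) = (0,0,0)" using v0 by (metis cross_sm1)
    then have "cross v0 y = (0,0,0)" using d'pos sm_zero by auto
    then have "cross y v0 = (0,0,0)" using cross_anti by (metis sm_zero_v)
    then show ?thesis using par_lemma p' by blast
  qed
  have perp2: "y = sm (dot p y) u0" if "dot y w = 0" "dot y v = 0" for y
  proof -
    have "cross (cross w v) y = (0,0,0)" unfolding triple using that dot_comm by (metis sm_0 vsub_self)
    moreover have "cross w v = sm N u" unfolding w_def triple using uv vv by simp
    ultimately have "sm N (cross u y) = (0,0,0)" by simp
    then have "cross u y = (0,0,0)" using Npos sm_zero by auto
    then have "sm d (cross u0 y) = (0,0,0)" using u0 by (metis cross_sm1)
    then have "cross u0 y = (0,0,0)" using dpos sm_zero by auto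
    then have "cross y u0 = (0,0,0)" using cross_anti by (metis sm_zero_v)
    then show ?thesis using par_lemma p by blast
  qed
  define H where "H = {x. dot x w = 0 \<and> 0 \<le> dot x u \<and> dot x u < t*N \<and> 0 \<le> dot x v \<and> dot x v < t*N}"
  define E1 where "E1 = {x. dot x w = 0 \<and> dot x u = t*N \<and> 0 \<le> dot x v \<and> dot x v \<le> t*N}"
  define E2 where "E2 = {x. dot x w = 0 \<and> dot x v = t*N \<and> 0 \<le> dot x u \<and> dot x u < t*N}"
  define C where "C = {x. dot x w = 0 \<and> 0 \<le> dot x u \<and> dot x u \<le> t*N \<and> 0 \<le> dot x v \<and> dot x v \<le> t*N}"
  define K where "K = (\<lambda>j. {k. 0 \<le> k*r + j*m \<and> k*r + j*m < (t*d)*r})"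
  define Q where "Q = (SIGMA j:{0..<t*e}. K j)"
  have tN1: "t*N = (t*d)*r" using dr by (simp add: algebra_simps)
  have tN2: "t*N = (t*e)* s" using es by (simp add: algebra_simps)
  have tN3: "t*N = (t*d')*r'" using dr' by (simp add: algebra_simps)
  have cK: "card (K j) = nat (t*d)" for j
    unfolding K_def using cardK[OF rpos, of "t*d" "j*m"] t dpos by (simp add: algebra_simps)
  have finK: "finite (K j)" for j
    unfolding K_def using cardK[OF rpos, of "t*d" "j*m"] t dpos by simp
  have bijH: "bij_betw f Q H"
  proof (rule bij_betwI')
    fix x y assume "x \<in> Q" "y \<in> Q"
    then show "(f x = f y) = (x = y)" using finj by (cases x; cases y) auto
  next
    fix x assume "x \<in> Q"
    then obtain j k where x: "x = (j,k)" and j: "0 \<le> j" "j < t*e" and k: "k \<in> K j"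
      unfolding Q_def by auto
    have "j* s < (t*e)* s" using j spos by (simp add: mult_strict_right_mono)
    then have js: "j* s < t*N" using tN2 by metis
    have "0 \<le> j* s" using j spos by simp
    moreover have "0 \<le> k*r + j*m" "k*r + j*m < t*N" using k unfolding K_def tN1 by auto
    ultimately show "f x \<in> H" unfolding H_def x using fw fu fv js
      by (simp add: add.commute)
  next
    fix y assume y: "y \<in> H"
    then obtain j k where yf: "y = f (j,k)" using rep H_def by blast
    have "0 \<le> j* s" "j* s < t*N" using y fv unfolding H_def yf by auto
    then have "0 \<le> j* s" "j* s < (t*e)* s" using tN2 by metis+
    then have "0 \<le> j" "j < t*e" using spos by (simp_all add: zero_le_mult_iff)
    moreover have "k \<in> K j" using y fu unfolding H_def K_def yf tN1 by (simp add: add.commute)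
    ultimately show "\<exists>x\<in>Q. y = f x" using yf unfolding Q_def by auto
  qed
  have cQ: "card Q = nat (t*e) * nat (t*d)"
    unfolding Q_def using cK finK by simp
  define g1 where "g1 = (\<lambda>k. vadd (sm t u) (sm k v0))"
  have bij1: "bij_betw g1 {0..t*d'} E1"
  proof (rule bij_betwI')
    fix x y assume "x \<in> {0..t*d'}" "y \<in> {0..t*d'}"
    show "(g1 x = g1 y) = (x = y)" unfolding g1_def using vadd_cancel sm_inj v0nz by metis
  next
    fix k assume k: "k \<in> {0..t*d'}"
    have "0 \<le> k*r'" "k*r' \<le> (t*d')*r'" using k r'pos by (auto intro: mult_right_mono)
    then have "0 \<le> k*r'" "k*r' \<le> t*N" using tN3 by metis+
    then show "g1 k \<in> E1" unfolding g1_def E1_def using wu v0w v0u uv uu r'_def dot_comm[of u w]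
      by simp
  next
    fix x assume x: "x \<in> E1"
    define y where "y = vsub x (sm t u)"
    have "dot y w = 0" "dot y u = 0" using x wu uu dot_comm[of u w] unfolding y_def E1_def by auto
    then have yy: "y = sm (dot p' y) v0" using perp1 by blast
    define k where "k = dot p' y"
    have xg: "x = g1 k" unfolding g1_def k_def using yy y_def vadd_sub by metis
    have "dot x v = k * r'" using xg uv r'_def unfolding g1_def by simp
    then have "0 \<le> k*r'" "k*r' \<le> t*N" using x unfolding E1_def by auto
    then have "0 \<le> k*r'" "k*r' \<le> (t*d')*r'" using tN3 by metis+
    then have "k \<in> {0..t*d'}" using r'pos by (simp add: zero_le_mult_iff)
    then show "\<exists>k\<in>{0..t*d'}. x = g1 k" using xg by blast
  qed
  define g2 where "g2 = (\<lambda>k. vadd (sm t v) (sm k u0))"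
  have bij2: "bij_betw g2 {0..<t*d} E2"
  proof (rule bij_betwI')
    fix x y assume "x \<in> {0..<t*d}" "y \<in> {0..<t*d}"
    show "(g2 x = g2 y) = (x = y)" unfolding g2_def using vadd_cancel sm_inj u0nz by metis
  next
    fix k assume k: "k \<in> {0..<t*d}"
    have "0 \<le> k*r'" "k*r < (t*d)*r" using k rpos r'pos by (auto intro: mult_strict_right_mono)
    moreover have "0 \<le> k*r" using k rpos by auto
    ultimately have "0 \<le> k*r" "k*r < t*N" using tN1 by metis+
    then show "g2 k \<in> E2" unfolding g2_def E2_def using wv u0w u0v vu vv r_def dot_comm[of v w]
      by simp
  next
    fix x assume x: "x \<in> E2"
    define y where "y = vsub x (sm t v)"
    have "dot y w = 0" "dot y v = 0" using x wv vv dot_comm[of v w] unfolding y_def E2_def by auto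
    then have yy: "y = sm (dot p y) u0" using perp2 by blast
    define k where "k = dot p y"
    have xg: "x = g2 k" unfolding g2_def k_def using yy y_def vadd_sub by metis
    have "dot x u = k * r" using xg vu r_def unfolding g2_def by simp
    then have "0 \<le> k*r" "k*r < t*N" using x unfolding E2_def by auto
    then have "0 \<le> k*r" "k*r < (t*d)*r" using tN1 by metis+
    then have "k \<in> {0..<t*d}" using rpos by (simp add: zero_le_mult_iff)
    then show "\<exists>k\<in>{0..<t*d}. x = g2 k" using xg by blast
  qed
  have CU: "C = H \<union> E1 \<union> E2" unfolding C_def H_def E1_def E2_def by auto
  have finQ: "finite Q" unfolding Q_def using finK by auto
  have finH: "finite H" using bij_betw_finite bijH finQ by blast
  have finE1: "finite E1" using bij_betw_finite bij1 by blast
  have finE2: "finite E2" using bij_betw_finite bij2 by blast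
  have d1: "H \<inter> E1 = {}" "(H \<union> E1) \<inter> E2 = {}" unfolding H_def E1_def E2_def by auto
  have "card C = card (H \<union> E1) + card E2"
    unfolding CU using finH finE1 finE2 d1 by (simp add: card_Un_disjoint)
  also have "card (H \<union> E1) = card H + card E1" using finH finE1 d1 by (simp add: card_Un_disjoint)
  also have "card H = nat (t*e) * nat (t*d)" using bij_betw_same_card[OF bijH] cQ by simp
  also have "card E1 = nat (t*d' + 1)" using bij_betw_same_card[OF bij1] by simp
  also have "card E2 = nat (t*d)" using bij_betw_same_card[OF bij2] by simp
  finally have "int (card C) = (t*e)*(t*d) + (t*d' + 1) + t*d"
    using t dpos d'pos epos by simp
  also have "\<dots> = t^2 * D + t*(d + d') + 1" using De by (simp add: algebra_simps power2_eq_square)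
  finally show ?thesis unfolding C_def w_def D_def d_def d'_def by simp
qed


lemma recon:
  assumes "dot x (cross v u) = 0" "dot u v = 0" "dot u u = N" "dot v v = N" "N \<noteq> 0"
  shows "sm N x = vadd (sm (dot x u) u) (sm (dot x v) v)"
proof -
  obtain x1 x2 x3 where x: "x = (x1,x2,x3)" by (cases x rule: vcases)
  obtain a b c where u: "u = (a,b,c)" by (cases u rule: vcases)
  obtain a' b' c' where v: "v = (a',b',c')" by (cases v rule: vcases)
  have h: "x1*(b' *c - c' *b) + x2*(c' *a - a' *c) + x3*(a' *b - b' *a) = 0" "a*a'+b*b'+c*c' = 0"
    "a*a+b*b+c*c = N" "a' *a'+b' *b'+c' *c' = N" using assms x u v by auto
  have "N*(N*x1) = N*((x1*a+x2*b+x3*c)*a + (x1*a'+x2*b'+x3*c')*a')" using h by algebra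
  moreover have "N*(N*x2) = N*((x1*a+x2*b+x3*c)*b + (x1*a'+x2*b'+x3*c')*b')" using h by algebra
  moreover have "N*(N*x3) = N*((x1*a+x2*b+x3*c)*c + (x1*a'+x2*b'+x3*c')*c')" using h by algebra
  ultimately show ?thesis using assms(5) x u v by simp
qed

lemma hull_par:
  fixes U V :: "'a::real_vector"
  shows "convex hull {0, U, V, U+V} = {\<alpha> *\<^sub>R U + \<beta> *\<^sub>R V | \<alpha> \<beta>. 0 \<le> \<alpha> \<and> \<alpha> \<le> 1 \<and> 0 \<le> \<beta> \<and> \<beta> \<le> 1}"
    (is "_ = ?P")
proof
  show "convex hull {0, U, V, U+V} \<subseteq> ?P"
  proof (rule hull_minimal)
    have "0 \<in> ?P" by (rule CollectI, rule exI[of _ 0], rule exI[of _ 0]) simp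
    moreover have "U \<in> ?P" by (rule CollectI, rule exI[of _ 1], rule exI[of _ 0]) simp
    moreover have "V \<in> ?P" by (rule CollectI, rule exI[of _ 0], rule exI[of _ 1]) simp
    moreover have "U + V \<in> ?P" by (rule CollectI, rule exI[of _ 1], rule exI[of _ 1]) simp
    ultimately show "{0, U, V, U+V} \<subseteq> ?P" by blast
    show "convex ?P" unfolding convex_def
    proof (intro ballI allI impI)
      fix x y and s t :: real
      assume "x \<in> ?P" "y \<in> ?P" "0 \<le> s" "0 \<le> t" "s + t = 1"
      then obtain a1 b1 a2 b2 where x: "x = a1 *\<^sub>R U + b1 *\<^sub>R V" and y: "y = a2 *\<^sub>R U + b2 *\<^sub>R V"
        and r: "0 \<le> a1" "a1 \<le> 1" "0 \<le> b1" "b1 \<le> 1" "0 \<le> a2" "a2 \<le> 1" "0 \<le> b2" "b2 \<le> 1"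
        and st: "0 \<le> s" "0 \<le> t" "s + t = 1" by blast
      have e: "s *\<^sub>R x + t *\<^sub>R y = (s*a1 + t*a2) *\<^sub>R U + (s*b1 + t*b2) *\<^sub>R V"
        unfolding x y by (simp add: algebra_simps)
      have "0 \<le> s*a1 + t*a2" "s*a1 + t*a2 \<le> 1" "0 \<le> s*b1 + t*b2" "s*b1 + t*b2 \<le> 1"
        using r st by (auto intro: convex_bound_le)
      then show "s *\<^sub>R x + t *\<^sub>R y \<in> ?P" unfolding e by blast
    qed
  qed
  show "?P \<subseteq> convex hull {0, U, V, U+V}"
  proof
    fix z assume "z \<in> ?P"
    then obtain a b where z: "z = a *\<^sub>R U + b *\<^sub>R V" and r: "0 \<le> a" "a \<le> 1" "0 \<le> b" "b \<le> 1"
      by blast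
    let ?H = "convex hull {0, U, V, U+V}"
    have cv: "convex ?H" by (rule convex_convex_hull)
    have m: "0 \<in> ?H" "U \<in> ?H" "V \<in> ?H" "U + V \<in> ?H" by (auto intro: hull_inc)
    have "(1-a) *\<^sub>R 0 + a *\<^sub>R U \<in> ?H" using r m by (intro convexD[OF cv]) auto
    then have h1: "a *\<^sub>R U \<in> ?H" by simp
    have h2: "(1-a) *\<^sub>R V + a *\<^sub>R (U+V) \<in> ?H" using r m by (intro convexD[OF cv]) auto
    have "(1-b) *\<^sub>R (a *\<^sub>R U) + b *\<^sub>R ((1-a) *\<^sub>R V + a *\<^sub>R (U+V)) \<in> ?H"
      using r h1 h2 m by (intro convexD[OF cv]) simp_all
    moreover have "(1-b) *\<^sub>R (a *\<^sub>R U) + b *\<^sub>R ((1-a) *\<^sub>R V + a *\<^sub>R (U+V)) = z"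
      unfolding z by (simp add: algebra_simps)
    ultimately show "z \<in> ?H" by simp
  qed
qed

lemma iv_comp[simp]: "int_vec3 x y z $ 1 = of_int x" "int_vec3 x y z $ 2 = of_int y" "int_vec3 x y z $ 3 = of_int z"
  by (simp_all add: int_vec3_def)


lemma real_set:
  fixes a b c a' b' c' N :: int and t :: nat
  assumes uv: "a*a'+b*b'+c*c' = 0" and uu: "a*a+b*b+c*c = N" and vv: "a'*a'+b'*b'+c'*c' = N"
    and Npos: "N > 0" and tpos: "t > 0"
  shows "(\<lambda>x. real t *\<^sub>R x) ` (convex hull {0, int_vec3 a b c, int_vec3 a' b' c', int_vec3 a b c + int_vec3 a' b' c'}) \<inter> lattice_points
     = (\<lambda>(x1,x2,x3). int_vec3 x1 x2 x3) ` {x. dot x (cross (a',b',c') (a,b,c)) = 0 \<and> 0 \<le> dot x (a,b,c) \<and> dot x (a,b,c) \<le> int t * N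
         \<and> 0 \<le> dot x (a',b',c') \<and> dot x (a',b',c') \<le> int t * N}" (is "?L = ?R")
proof
  define T where "T = real t"
  have Tpos: "T > 0" using tpos T_def by simp
  have NposR: "real_of_int N > 0" using Npos by simp
  have uvR: "of_int a * of_int a' + of_int b * of_int b' + of_int c * of_int c' = (0::real)"
    using uv by (metis of_int_0 of_int_add of_int_mult)
  have uuR: "of_int a * of_int a + of_int b * of_int b + of_int c * of_int c = (of_int N::real)"
    using uu by (metis of_int_add of_int_mult)
  have vvR: "of_int a' * of_int a' + of_int b' * of_int b' + of_int c' * of_int c' = (of_int N::real)"
    using vv by (metis of_int_add of_int_mult)
  show "?L \<subseteq> ?R"
  proof
    fix y assume y: "y \<in> ?L"
    then obtain z where yz: "y = T *\<^sub>R z" and zh: "z \<in> convex hull {0, int_vec3 a b c, int_vec3 a' b' c', int_vec3 a b c + int_vec3 a' b' c'}"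
      and lat: "y \<in> lattice_points" unfolding T_def by blast
    from zh obtain \<alpha> \<beta> where z: "z = \<alpha> *\<^sub>R int_vec3 a b c + \<beta> *\<^sub>R int_vec3 a' b' c'"
      and r: "0 \<le> \<alpha>" "\<alpha> \<le> 1" "0 \<le> \<beta>" "\<beta> \<le> 1" unfolding hull_par by blast
    have "y $ 1 \<in> \<int>" "y $ 2 \<in> \<int>" "y $ 3 \<in> \<int>" using lat unfolding lattice_points_def by auto
    then obtain x1 x2 x3 where x1: "y $ 1 = of_int x1" and x2: "y $ 2 = of_int x2" and x3: "y $ 3 = of_int x3"
      by (metis Ints_cases)
    have e1: "of_int x1 = T * (\<alpha> * of_int a + \<beta> * of_int a')" using x1 yz z by simp
    have e2: "of_int x2 = T * (\<alpha> * of_int b + \<beta> * of_int b')" using x2 yz z by simp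
    have e3: "of_int x3 = T * (\<alpha> * of_int c + \<beta> * of_int c')" using x3 yz z by simp
    have "real_of_int (dot (x1,x2,x3) (cross (a',b',c') (a,b,c))) =
      of_int x1 * (of_int b' * of_int c - of_int c' * of_int b) + of_int x2 * (of_int c' * of_int a - of_int a' * of_int c)
      + of_int x3 * (of_int a' * of_int b - of_int b' * of_int a)" by simp
    also have "\<dots> = 0" unfolding e1 e2 e3 by algebra
    finally have w0: "dot (x1,x2,x3) (cross (a',b',c') (a,b,c)) = 0" by linarith
    have "real_of_int (dot (x1,x2,x3) (a,b,c)) = of_int x1 * of_int a + of_int x2 * of_int b + of_int x3 * of_int c" by simp
    also have "\<dots> = T * \<alpha> * (of_int a * of_int a + of_int b * of_int b + of_int c * of_int c)
        + T * \<beta> * (of_int a * of_int a' + of_int b * of_int b' + of_int c * of_int c')"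
      unfolding e1 e2 e3 by algebra
    also have "\<dots> = T * \<alpha> * of_int N" using uuR uvR by simp
    finally have du: "real_of_int (dot (x1,x2,x3) (a,b,c)) = T * \<alpha> * of_int N" .
    have "real_of_int (dot (x1,x2,x3) (a',b',c')) = of_int x1 * of_int a' + of_int x2 * of_int b' + of_int x3 * of_int c'" by simp
    also have "\<dots> = T * \<alpha> * (of_int a * of_int a' + of_int b * of_int b' + of_int c * of_int c')
        + T * \<beta> * (of_int a' * of_int a' + of_int b' * of_int b' + of_int c' * of_int c')"
      unfolding e1 e2 e3 by algebra
    also have "\<dots> = T * \<beta> * of_int N" using vvR uvR by simp
    finally have dv: "real_of_int (dot (x1,x2,x3) (a',b',c')) = T * \<beta> * of_int N" .
    have b1: "0 \<le> T * \<alpha> * of_int N" "T * \<alpha> * of_int N \<le> T * of_int N"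
      "0 \<le> T * \<beta> * of_int N" "T * \<beta> * of_int N \<le> T * of_int N"
      using r Tpos NposR by (auto intro!: mult_right_mono mult_left_le simp: mult.assoc mult_nonneg_nonneg)
    have "0 \<le> dot (x1,x2,x3) (a,b,c)" using du b1 by (metis of_int_0_le_iff)
    moreover have "dot (x1,x2,x3) (a,b,c) \<le> int t * N"
    proof -
      have "real_of_int (dot (x1,x2,x3) (a,b,c)) \<le> real_of_int (int t * N)" using du b1 T_def by simp
      then show ?thesis by linarith
    qed
    moreover have "0 \<le> dot (x1,x2,x3) (a',b',c')" using dv b1 by (metis of_int_0_le_iff)
    moreover have "dot (x1,x2,x3) (a',b',c') \<le> int t * N"
    proof -
      have "real_of_int (dot (x1,x2,x3) (a',b',c')) \<le> real_of_int (int t * N)" using dv b1 T_def by simp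
      then show ?thesis by linarith
    qed
    moreover have "y = (\<lambda>(x1,x2,x3). int_vec3 x1 x2 x3) (x1,x2,x3)"
      using x1 x2 x3 by (simp add: vec_eq_iff forall_3)
    ultimately show "y \<in> ?R" using w0 by blast
  qed
  show "?R \<subseteq> ?L"
  proof
    fix y assume "y \<in> ?R"
    then obtain x1 x2 x3 where y: "y = int_vec3 x1 x2 x3"
      and w0: "dot (x1,x2,x3) (cross (a',b',c') (a,b,c)) = 0"
      and bu: "0 \<le> dot (x1,x2,x3) (a,b,c)" "dot (x1,x2,x3) (a,b,c) \<le> int t * N"
      and bv: "0 \<le> dot (x1,x2,x3) (a',b',c')" "dot (x1,x2,x3) (a',b',c') \<le> int t * N" by auto
    define du where "du = dot (x1,x2,x3) (a,b,c)"
    define dv where "dv = dot (x1,x2,x3) (a',b',c')"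
    have rc: "sm N (x1,x2,x3) = vadd (sm du (a,b,c)) (sm dv (a',b',c'))"
      unfolding du_def dv_def using recon[OF w0] uv uu vv Npos by simp
    then have i1: "N*x1 = du*a + dv*a'" and i2: "N*x2 = du*b + dv*b'" and i3: "N*x3 = du*c + dv*c'" by auto
    define \<alpha> where "\<alpha> = of_int du / (T * of_int N)"
    define \<beta> where "\<beta> = of_int dv / (T * of_int N)"
    have TN: "T * of_int N > 0" using Tpos NposR by simp
    have bu': "0 \<le> du" "du \<le> int t * N" using bu unfolding du_def by auto
    have bv': "0 \<le> dv" "dv \<le> int t * N" using bv unfolding dv_def by auto
    have r: "0 \<le> \<alpha>" "\<alpha> \<le> 1" "0 \<le> \<beta>" "\<beta> \<le> 1"
    proof -
      have "real_of_int du \<le> T * of_int N" using bu' T_def by (metis of_int_le_iff of_int_mult of_int_of_nat_eq)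
      moreover have "real_of_int dv \<le> T * of_int N" using bv' T_def by (metis of_int_le_iff of_int_mult of_int_of_nat_eq)
      moreover have "0 \<le> real_of_int du" "0 \<le> real_of_int dv" using bu' bv' by simp_all
      ultimately show "0 \<le> \<alpha>" "\<alpha> \<le> 1" "0 \<le> \<beta>" "\<beta> \<le> 1"
        using TN unfolding \<alpha>_def \<beta>_def by (simp_all add: divide_le_eq_1)
    qed
    define z where "z = \<alpha> *\<^sub>R int_vec3 a b c + \<beta> *\<^sub>R int_vec3 a' b' c'"
    have zh: "z \<in> convex hull {0, int_vec3 a b c, int_vec3 a' b' c', int_vec3 a b c + int_vec3 a' b' c'}"
      unfolding hull_par z_def using r by blast
    have cmp: "T * (\<alpha> * of_int p + \<beta> * of_int p') = of_int x" if "N*x = du*p + dv*p'" for p p' x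
    proof -
      have "real_of_int N * of_int x = of_int du * of_int p + of_int dv * of_int p'"
        using that by (metis of_int_add of_int_mult)
      then show ?thesis unfolding \<alpha>_def \<beta>_def using TN NposR Tpos
        by (simp add: field_simps)
    qed
    have "y = T *\<^sub>R z" unfolding y z_def using cmp[OF i1] cmp[OF i2] cmp[OF i3]
      by (simp add: vec_eq_iff forall_3)
    moreover have "y \<in> lattice_points" unfolding lattice_points_def y
      by (auto simp: forall_3[symmetric]) (metis exhaust_3 iv_comp Ints_of_int)
    ultimately show "y \<in> ?L" using zh T_def by blast
  qed
qed

theorem theorem2p2:
  fixes a b c a' b' c' :: int
  assumes "(a, b, c) \<noteq> (0, 0, 0)"
    and "(a', b', c') \<noteq> (0, 0, 0)"
    and "a^2 + b^2 + c^2 = a'^2 + b'^2 + c'^2"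
    and "a * a' + b * b' + c * c' = 0"
    and "Gcd {a, b, c, a', b', c'} = 1"
  shows "ehrhart_poly (convex hull {0, int_vec3 a b c, int_vec3 a' b' c',
                                    int_vec3 a b c + int_vec3 a' b' c'})
         = [: 1, of_int (Gcd {a, b, c} + Gcd {a', b', c'}),
              of_int (Gcd {b * c' - b' * c, a * c' - a' * c, a * b' - a' * b}) :]"
proof -
  define u :: iv where "u = (a,b,c)"
  define v :: iv where "v = (a',b',c')"
  define N where "N = a*a+b*b+c*c"
  define P where "P = convex hull {0, int_vec3 a b c, int_vec3 a' b' c', int_vec3 a b c + int_vec3 a' b' c'}"
  define Q where "Q = ([: 1, of_int (Gcd {a, b, c} + Gcd {a', b', c'}),
              of_int (Gcd {b * c' - b' * c, a * c' - a' * c, a * b' - a' * b}) :] :: real poly)"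
  have uv: "dot u v = 0" using assms(4) by (simp add: u_def v_def)
  have uu: "dot u u = N" by (simp add: u_def N_def)
  have vv: "dot v v = N" using assms(3) by (simp add: v_def N_def power2_eq_square)
  have nzu: "u \<noteq> (0,0,0)" using assms(1) u_def by simp
  have nzv: "v \<noteq> (0,0,0)" using assms(2) v_def by simp
  have Npos: "N > 0" using dot_self_pos[OF nzu] uu by simp
  have gu: "gv u = Gcd {a,b,c}" by (simp add: u_def)
  have gv': "gv v = Gcd {a',b',c'}" by (simp add: v_def)
  have gw: "gv (cross v u) = Gcd {b * c' - b' * c, a * c' - a' * c, a * b' - a' * b}"
  proof -
    have "b' * c - c' * b = - (b * c' - b' * c)" "c' * a - a' * c = a * c' - a' * c"
      "a' * b - b' * a = - (a * b' - a' * b)" by (simp_all add: algebra_simps)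
    then have "gv (cross v u) = gcd (- (b * c' - b' * c)) (gcd (a * c' - a' * c) (- (a * b' - a' * b)))"
      unfolding u_def v_def by (simp only: cross.simps gv.simps)
    also have "\<dots> = gcd (b * c' - b' * c) (gcd (a * c' - a' * c) (a * b' - a' * b))"
      by (simp only: gcd_neg1 gcd_neg2)
    finally show ?thesis by simp
  qed
  have key: "poly Q (real t) = real (card ((\<lambda>x. real t *\<^sub>R x) ` P \<inter> lattice_points))" if t: "t > 0" for t :: nat
  proof -
    define C where "C = {x. dot x (cross v u) = 0 \<and> 0 \<le> dot x u \<and> dot x u \<le> int t * N
         \<and> 0 \<le> dot x v \<and> dot x v \<le> int t * N}"
    have vvN: "a'*a'+b'*b'+c'*c' = N" using assms(3) N_def by (simp add: power2_eq_square)
    have seq: "(\<lambda>x. real t *\<^sub>R x) ` P \<inter> lattice_points = (\<lambda>(x1,x2,x3). int_vec3 x1 x2 x3) ` C"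
      unfolding P_def C_def u_def v_def
      by (rule real_set[OF assms(4) N_def[symmetric] vvN Npos t])
    have inj: "inj_on (\<lambda>(x1,x2,x3). int_vec3 x1 x2 x3) C"
    proof (rule inj_onI)
      fix x y assume "x \<in> C" "y \<in> C" "(\<lambda>(x1,x2,x3). int_vec3 x1 x2 x3) x = (\<lambda>(x1,x2,x3). int_vec3 x1 x2 x3) y"
      then show "x = y"
        by (cases x rule: vcases; cases y rule: vcases) (auto simp: vec_eq_iff forall_3)
    qed
    have "int (card C) = (int t)^2 * gv (cross v u) + int t * (gv u + gv v) + 1"
      unfolding C_def using int_count[OF nzu nzv uv uu vv, of "int t"] by simp
    then have "real (card C) = real_of_int ((int t)^2 * gv (cross v u) + int t * (gv u + gv v) + 1)"
      by (metis of_int_of_nat_eq)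
    also have "\<dots> = poly Q (real t)"
      unfolding Q_def gu gv' gw by (simp add: algebra_simps power2_eq_square)
    finally show ?thesis unfolding seq card_image[OF inj] by simp
  qed
  have "ehrhart_poly P = Q"
    unfolding ehrhart_poly_def
  proof (rule the_equality)
    show "\<forall>t::nat. t > 0 \<longrightarrow> poly Q (real t) = real (card ((\<lambda>x. real t *\<^sub>R x) ` P \<inter> lattice_points))"
      using key by blast
  next
    fix p :: "real poly"
    assume h: "\<forall>t::nat. t > 0 \<longrightarrow> poly p (real t) = real (card ((\<lambda>x. real t *\<^sub>R x) ` P \<inter> lattice_points))"
    have "poly (p - Q) (real (Suc n)) = 0" for n
    proof -
      have "poly p (real (Suc n)) = poly Q (real (Suc n))"
        using spec[OF h, of "Suc n"] key[of "Suc n"] by (simp del: of_nat_Suc)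
      then show ?thesis by simp
    qed
    then have sub: "range (\<lambda>n. real (Suc n)) \<subseteq> {x. poly (p - Q) x = 0}" by blast
    have "infinite (range (\<lambda>n. real (Suc n)))"
      by (rule range_inj_infinite) (auto simp: inj_def)
    then have "infinite {x. poly (p - Q) x = 0}" using sub finite_subset by blast
    then have "p - Q = 0" using poly_roots_finite by blast
    then show "p = Q" by simp
  qed
  then show ?thesis unfolding P_def Q_def .
qed

end
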